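(* Let $r\in\mathbb{N}$ and let $p\in(\frac{1}{r+1},\frac1r]$ be fixed. Let $(H_n)_{n\in\mathbb{N}}$ be a sequence of weakly $q$-pseudorandom graphs on $n$ vertices with $q=q(n)\gg\log(n)/n$. Then the following hold for $H=H_n$: (i) For every $\mu\in\mathcal{M}_{1,p}(H)$, with probability $1-o(1)$ we have $|C_1(\mathbf{H}_\mu)|\geq(1-o(1))\frac{1+\sqrt{\frac{(r+1)p-1}{r}}}{r+1}\,n$. (ii) There exists $\mu\in\mathcal{M}_{1,p}(H)$ such that with probability $1-o(1)$ the random graph $\mathbf{H}_\mu$ satisfies $|C_1(\mathbf{H}_\mu)|\leq(1+o(1))\frac{1+\sqrt{\frac{(r+1)p-1}{r}}}{r+1}\,n$.
   Context: A sequence $(H_n)$ of $n$-vertex graphs is weakly $q$-pseudorandom if $\max\{|e(H_n[U])-q|U|^2/2|:\ U\subseteq V(H_n)\}=o(qn^2)$. A random graph model on $H$ is a probability measure $\mu$ on subsets of $E(H)$, and $\mathbf{H}_\mu$ is the random spanning subgraph of $H$ with edge set distributed according to $\mu$. $\mu$ is $1$-independent if for all sets $A,B\subseteq E(H)$ whose edges span disjoint vertex sets, $E(\mathbf{H}_\mu)\cap A$ and $E(\mathbf{H}_\mu)\cap B$ are independent. $\mathcal{M}_{1,p}(H)$ is the set of $1$-independent measures on $H$ in which each edge is present with probability exactly $p$. $C_1(\mathbf{H}_\mu)$ denotes a largest connected component of $\mathbf{H}_\mu$. Asymptotics are as $n\to\infty$. *)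

theory Defs
  imports "HOL-Probability.Probability" "HOL-Library.Landau_Symbols"
begin

definition simple_graph_on :: "nat \<Rightarrow> nat set set \<Rightarrow> bool" where
  "simple_graph_on n E \<longleftrightarrow> (\<forall>e\<in>E. e \<subseteq> {..<n} \<and> card e = 2)"

definition induced_edges :: "nat set set \<Rightarrow> nat set \<Rightarrow> nat" where
  "induced_edges H U = card {e\<in>H. e \<subseteq> U}"

definition discrepancy :: "nat \<Rightarrow> nat set set \<Rightarrow> real \<Rightarrow> real" where
  "discrepancy n H q = Max {\<bar>real (induced_edges H U) - q * real (card U)^2 / 2\<bar> | U. U \<subseteq> {..<n}}"

definition weakly_pseudorandom :: "(nat \<Rightarrow> nat set set) \<Rightarrow> (nat \<Rightarrow> real) \<Rightarrow> bool" where
  "weakly_pseudorandom H q \<longleftrightarrow>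
     (\<forall>n. simple_graph_on n (H n)) \<and>
     (\<lambda>n. discrepancy n (H n) (q n)) \<in> o(\<lambda>n. q n * real n ^ 2)"

definition one_independent :: "nat set set \<Rightarrow> nat set set pmf \<Rightarrow> bool" where
  "one_independent H \<mu> \<longleftrightarrow>
     (\<forall>A B S T. A \<subseteq> H \<longrightarrow> B \<subseteq> H \<longrightarrow> \<Union>A \<inter> \<Union>B = {} \<longrightarrow>
        measure_pmf.prob \<mu> {X. X \<inter> A = S \<and> X \<inter> B = T}
        = measure_pmf.prob \<mu> {X. X \<inter> A = S} * measure_pmf.prob \<mu> {X. X \<inter> B = T})"

definition M1p :: "nat set set \<Rightarrow> real \<Rightarrow> nat set set pmf set" where
  "M1p H p = {\<mu>. set_pmf \<mu> \<subseteq> Pow H \<and> one_independent H \<mu> \<and>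
                  (\<forall>e\<in>H. measure_pmf.prob \<mu> {X. e \<in> X} = p)}"

definition component :: "nat \<Rightarrow> nat set set \<Rightarrow> nat \<Rightarrow> nat set" where
  "component n X v = {u. u < n \<and> (\<lambda>a b. {a, b} \<in> X)\<^sup>*\<^sup>* v u}"

definition largest_component_size :: "nat \<Rightarrow> nat set set \<Rightarrow> nat" where
  "largest_component_size n X = Max ((\<lambda>v. card (component n X v)) ` {..<n})"

end

theory Submission
  imports Defs "HOL-Real_Asymp.Real_Asymp"
begin


lemma sq_sum_bound:
  fixes b :: "'i \<Rightarrow> real" and x :: real
  assumes "finite I" "x > 0" "\<And>i. i \<in> I \<Longrightarrow> 0 \<le> b i \<and> b i \<le> x"
  shows "\<forall>r::nat. real r * x \<le> sum b I \<and> sum b I \<le> (real r + 1) * x \<longrightarrow>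
           (\<Sum>i\<in>I. (b i)^2) \<le> real r * x^2 + (sum b I - real r * x)^2"
  using assms(1,3)
proof (induction I rule: finite_induct)
  case empty
  then show ?case using assms(2)
    by (auto simp: mult_le_0_iff)
next
  case (insert i I)
  have bi: "0 \<le> b i" "b i \<le> x" using insert.prems by auto
  have IH: "\<forall>r::nat. real r * x \<le> sum b I \<and> sum b I \<le> (real r + 1) * x \<longrightarrow>
           (\<Sum>i\<in>I. (b i)^2) \<le> real r * x^2 + (sum b I - real r * x)^2"
    using insert by auto
  show ?case
  proof (intro allI impI)
    fix r :: nat
    assume r: "real r * x \<le> sum b (insert i I) \<and> sum b (insert i I) \<le> (real r + 1) * x"
    have S: "sum b (insert i I) = b i + sum b I" using insert by simp
    have SQ: "(\<Sum>i\<in>insert i I. (b i)^2) = (b i)^2 + (\<Sum>i\<in>I. (b i)^2)" using insert by simp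
    show "(\<Sum>i\<in>insert i I. (b i)^2) \<le> real r * x^2 + (sum b (insert i I) - real r * x)^2"
    proof (cases "real r * x \<le> sum b I")
      case True
      have "(\<Sum>i\<in>I. (b i)^2) \<le> real r * x^2 + (sum b I - real r * x)^2"
        using IH True r S bi by auto
      moreover have "(sum b I - real r * x) * b i \<ge> 0" using True bi by simp
      ultimately show ?thesis unfolding SQ S by (simp add: power2_eq_square algebra_simps)
    next
      case False
      have nn: "0 \<le> sum b I" using insert.prems by (intro sum_nonneg) auto
      then obtain r' where r': "r = Suc r'" using False by (cases r) auto
      have "real r' * x \<le> sum b I \<and> sum b I \<le> (real r' + 1) * x"
        using False r S bi r' by (auto simp: algebra_simps)
      then have h: "(\<Sum>i\<in>I. (b i)^2) \<le> real r' * x^2 + (sum b I - real r' * x)^2"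
        using IH by blast
      define \<alpha> where "\<alpha> = sum b I - real r' * x"
      have a1: "\<alpha> \<le> x" using False r' unfolding \<alpha>_def by (auto simp: algebra_simps)
      have "(x - \<alpha>) * (x - b i) \<ge> 0" using a1 bi by simp
      then have "\<alpha>^2 + (b i)^2 \<le> x^2 + (\<alpha> + b i - x)^2"
        by (simp add: power2_eq_square algebra_simps)
      moreover have "sum b (insert i I) - real r * x = \<alpha> + b i - x"
        unfolding S \<alpha>_def r' by (simp add: algebra_simps)
      ultimately show ?thesis using h unfolding SQ r' \<alpha>_def
        by (simp add: algebra_simps power2_eq_square)
    qed
  qed
qed


lemma grouping:
  fixes x :: real
  assumes "finite \<C>" "pairwise disjnt \<C>" "\<And>C. C \<in> \<C> \<Longrightarrow> finite C \<and> real (card C) \<le> x" "x > 0"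
  shows "\<exists>\<G>. finite \<G> \<and> pairwise disjnt \<G> \<and> \<Union>\<G> = \<Union>\<C> \<and> (\<forall>G\<in>\<G>. finite G \<and> real (card G) \<le> x)
            \<and> (\<forall>C\<in>\<C>. \<exists>G\<in>\<G>. C \<subseteq> G) \<and> card {G\<in>\<G>. real (card G) \<le> x/2} \<le> 1"
  using assms(1,2,3)
proof (induction \<C> rule: finite_induct)
  case empty
  show ?case by (rule exI[of _ "{}"]) auto
next
  case (insert C \<C>)
  have "pairwise disjnt \<C>" using insert.prems(1) by (meson pairwise_insert)
  then obtain \<G> where G: "finite \<G>" "pairwise disjnt \<G>" "\<Union>\<G> = \<Union>\<C>" "\<forall>G\<in>\<G>. finite G \<and> real (card G) \<le> x"
     "\<forall>C\<in>\<C>. \<exists>G\<in>\<G>. C \<subseteq> G" "card {G\<in>\<G>. real (card G) \<le> x/2} \<le> 1"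
    using insert by auto
  have Cfin: "finite C" "real (card C) \<le> x" using insert.prems by auto
  have Cdis: "C \<inter> \<Union>\<G> = {}"
  proof -
    have "\<forall>C'\<in>\<C>. disjnt C C'"
      using insert.prems(1) insert.hyps(2) unfolding pairwise_insert by auto
    then show ?thesis using G(3) by (auto simp: disjnt_def)
  qed
  show ?case
  proof (cases "real (card C) > x/2")
    case True
    have Cne: "C \<noteq> {}" using True assms(4) by auto
    have CnG: "C \<notin> \<G>" using Cdis Cne by auto
    have "{G\<in>insert C \<G>. real (card G) \<le> x/2} = {G\<in>\<G>. real (card G) \<le> x/2}" using True by auto
    moreover have "pairwise disjnt (insert C \<G>)"
      using G(2) Cdis unfolding pairwise_insert by (auto simp: disjnt_def)
    ultimately show ?thesis using G Cfin
      by (intro exI[of _ "insert C \<G>"]) auto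
  next
    case False
    show ?thesis
    proof (cases "\<exists>G0\<in>\<G>. real (card G0) \<le> x/2")
      case True
      then obtain G0 where G0: "G0 \<in> \<G>" "real (card G0) \<le> x/2" by auto
      have small: "{G\<in>\<G>. real (card G) \<le> x/2} = {G0}"
      proof -
        have "G0 \<in> {G\<in>\<G>. real (card G) \<le> x/2}" using G0 by auto
        moreover have "finite {G\<in>\<G>. real (card G) \<le> x/2}" using G(1) by auto
        ultimately show ?thesis using G(6)
          by (auto simp: card_le_Suc0_iff_eq)
      qed
      define \<G>' where "\<G>' = insert (G0 \<union> C) (\<G> - {G0})"
      have fin0: "finite G0" using G(4) G0 by auto
      have cardU: "card (G0 \<union> C) = card G0 + card C"
        using Cdis G0 fin0 Cfin by (intro card_Un_disjoint) auto
      have "{G\<in>\<G>'. real (card G) \<le> x/2} \<subseteq> {G0 \<union> C}"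
        using small unfolding \<G>'_def by auto
      then have c1: "card {G\<in>\<G>'. real (card G) \<le> x/2} \<le> 1"
        using card_mono[OF finite.insertI[OF finite.emptyI]] by fastforce
      have pw1: "\<forall>y\<in>\<G> - {G0}. disjnt (G0 \<union> C) y \<and> disjnt y (G0 \<union> C)"
      proof
        fix y assume y: "y \<in> \<G> - {G0}"
        have "disjnt G0 y" using G(2) G0 y by (auto simp: pairwise_def)
        moreover have "disjnt C y" using Cdis y by (auto simp: disjnt_def)
        ultimately show "disjnt (G0 \<union> C) y \<and> disjnt y (G0 \<union> C)"
          by (auto simp: disjnt_def)
      qed
      have pw2: "pairwise disjnt (\<G> - {G0})" using G(2) by (meson Diff_subset pairwise_subset)
      have pw: "pairwise disjnt \<G>'"
        unfolding \<G>'_def pairwise_insert using pw1 pw2 by blast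
      have un: "\<Union>\<G>' = \<Union>(insert C \<C>)" using G(3) G0 unfolding \<G>'_def by auto
      have sz: "\<forall>G\<in>\<G>'. finite G \<and> real (card G) \<le> x"
        using G(4) Cfin fin0 cardU G0 False unfolding \<G>'_def by auto
      have cov: "\<forall>C'\<in>insert C \<C>. \<exists>G\<in>\<G>'. C' \<subseteq> G"
      proof
        fix C' assume "C' \<in> insert C \<C>"
        then show "\<exists>G\<in>\<G>'. C' \<subseteq> G"
        proof
          assume "C' = C" then show ?thesis unfolding \<G>'_def by auto
        next
          assume "C' \<in> \<C>"
          then obtain G where "G \<in> \<G>" "C' \<subseteq> G" using G(5) by auto
          then show ?thesis unfolding \<G>'_def by (cases "G = G0") auto
        qed
      qed
      have "finite \<G>'" using G(1) unfolding \<G>'_def by auto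
      then show ?thesis
        using pw un sz cov c1 by blast
    next
      case False2: False
      have "{G\<in>insert C \<G>. real (card G) \<le> x/2} \<subseteq> {C}" using False2 by auto
      then have c1: "card {G\<in>insert C \<G>. real (card G) \<le> x/2} \<le> 1"
        using card_mono[OF finite.insertI[OF finite.emptyI]] by fastforce
      have "pairwise disjnt (insert C \<G>)"
        using G(2) Cdis unfolding pairwise_insert by (auto simp: disjnt_def)
      then show ?thesis using G Cfin c1
        by (intro exI[of _ "insert C \<G>"]) auto
    qed
  qed
qed

lemma groups_card_bound:
  fixes x :: real
  assumes "finite \<G>" "pairwise disjnt \<G>" "\<forall>G\<in>\<G>. finite G" "card {G\<in>\<G>. real (card G) \<le> x/2} \<le> 1" "x > 0"
  shows "real (card \<G>) \<le> 2 * real (card (\<Union>\<G>)) / x + 1"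
proof -
  let ?S = "{G\<in>\<G>. real (card G) \<le> x/2}" and ?B = "{G\<in>\<G>. \<not> real (card G) \<le> x/2}"
  have "card \<G> = card ?S + card ?B"
    using assms(1) by (subst card_Un_disjoint[symmetric]) (auto intro: arg_cong[where f=card])
  moreover have "real (card ?B) * (x/2) \<le> real (card (\<Union>\<G>))"
  proof -
    have "real (card ?B) * (x/2) = (\<Sum>G\<in>?B. x/2)" by simp
    also have "\<dots> \<le> (\<Sum>G\<in>?B. real (card G))" by (intro sum_mono) auto
    also have "\<dots> \<le> (\<Sum>G\<in>\<G>. real (card G))" using assms(1) by (intro sum_mono2) auto
    also have "\<dots> = real (card (\<Union>\<G>))"
      using assms(2,3) by (simp add: card_Union_disjoint)
    finally show ?thesis .
  qed
  moreover have "real (card ?S) \<le> 1" using assms(4) by simp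
  moreover have "real (card ?B) \<le> 2 * real (card (\<Union>\<G>)) / x"
    using calculation(2) assms(5) by (simp add: pos_le_divide_eq mult.commute)
  ultimately show ?thesis by linarith
qed


lemma rtranclp_edge_sym:
  assumes "(\<lambda>a b. {a, b} \<in> X)\<^sup>*\<^sup>* u v"
  shows "(\<lambda>a b. {a, b} \<in> X)\<^sup>*\<^sup>* v u"
  using assms
proof (induction rule: rtranclp.induct)
  case (rtrancl_refl a) then show ?case by simp
next
  case (rtrancl_into_rtrancl a b c)
  have "{c, b} \<in> X" using rtrancl_into_rtrancl(2) by (simp add: insert_commute)
  then show ?case using rtrancl_into_rtrancl(3)
    by (metis (mono_tags, lifting) converse_rtranclp_into_rtranclp)
qed

lemma comp_sub: "component n X v \<subseteq> {..<n}"
  unfolding component_def by auto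

lemma comp_self: "v < n \<Longrightarrow> v \<in> component n X v"
  unfolding component_def by auto

lemma comp_eq:
  assumes "u \<in> component n X v" "u \<in> component n X w"
  shows "component n X v = component n X w"
proof -
  let ?R = "(\<lambda>a b. {a, b} \<in> X)"
  have a: "?R\<^sup>*\<^sup>* v u" and b: "?R\<^sup>*\<^sup>* w u" using assms unfolding component_def by auto
  have vw1: "?R\<^sup>*\<^sup>* v w" by (rule rtranclp_trans[OF a rtranclp_edge_sym[OF b]])
  have vw2: "?R\<^sup>*\<^sup>* w v" by (rule rtranclp_trans[OF b rtranclp_edge_sym[OF a]])
  have "?R\<^sup>*\<^sup>* v z \<longleftrightarrow> ?R\<^sup>*\<^sup>* w z" for z
    using rtranclp_trans[OF vw1, of z] rtranclp_trans[OF vw2, of z] by blast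
  then show ?thesis unfolding component_def by auto
qed

lemma edge_in_comp:
  assumes "{a, b} \<in> X" "b < n"
  shows "b \<in> component n X a"
  using assms unfolding component_def by auto

lemma few_edges:
  fixes x q D :: real
  assumes sg: "simple_graph_on n Hn" and XH: "X \<subseteq> Hn" and x: "x > 0"
    and comp: "\<forall>v<n. real (card (component n X v)) \<le> x"
    and Db: "\<forall>U\<subseteq>{..<n}. real (induced_edges Hn U) \<le> q * real (card U)^2 / 2 + D"
    and q: "q \<ge> 0" and D: "D \<ge> 0"
    and r: "real r * x \<le> real n" "real n \<le> (real r + 1) * x"
  shows "real (card X) \<le> q / 2 * (real r * x^2 + (real n - real r * x)^2) + (2 * real n / x + 1) * D"
proof -
  define \<C> where "\<C> = component n X ` {..<n}"
  have finC: "finite \<C>" unfolding \<C>_def by auto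
  have pwC: "pairwise disjnt \<C>"
  proof (rule pairwiseI)
    fix C1 C2 assume "C1 \<in> \<C>" "C2 \<in> \<C>" "C1 \<noteq> C2"
    then obtain a b where "C1 = component n X a" "C2 = component n X b" unfolding \<C>_def by auto
    then show "disjnt C1 C2" using comp_eq \<open>C1 \<noteq> C2\<close> unfolding disjnt_def by blast
  qed
  have szC: "finite C \<and> real (card C) \<le> x" if CC: "C \<in> \<C>" for C
  proof -
    obtain v where v: "v < n" "C = component n X v" using CC[unfolded \<C>_def] by blast
    have "finite C" using comp_sub[of n X v] v(2) finite_subset by blast
    then show ?thesis using comp v by auto
  qed
  have UC: "\<Union>\<C> = {..<n}"
  proof
    show "\<Union>\<C> \<subseteq> {..<n}" unfolding \<C>_def using comp_sub by auto
    show "{..<n} \<subseteq> \<Union>\<C>" unfolding \<C>_def using comp_self by fastforce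
  qed
  obtain \<G> where G: "finite \<G>" "pairwise disjnt \<G>" "\<Union>\<G> = \<Union>\<C>" "\<forall>G\<in>\<G>. finite G \<and> real (card G) \<le> x"
            "\<forall>C\<in>\<C>. \<exists>G\<in>\<G>. C \<subseteq> G" "card {G\<in>\<G>. real (card G) \<le> x/2} \<le> 1"
    using grouping[OF finC pwC szC x] by blast
  have cardU: "card (\<Union>\<G>) = n" using G(3) UC by simp
  have sumG: "(\<Sum>G\<in>\<G>. real (card G)) = real n"
  proof -
    have "card (\<Union>\<G>) = sum card \<G>" using G(2,4) by (intro card_Union_disjoint) auto
    then show ?thesis using cardU by (metis of_nat_sum)
  qed
  have cG: "real (card \<G>) \<le> 2 * real n / x + 1"
    using groups_card_bound[OF G(1,2)] G(4,6) x cardU by auto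
  have sub: "X \<subseteq> (\<Union>G\<in>\<G>. {e\<in>Hn. e \<subseteq> G})"
  proof
    fix e assume e: "e \<in> X"
    then have eH: "e \<in> Hn" using XH by auto
    then have "e \<subseteq> {..<n}" "card e = 2" using sg unfolding simple_graph_on_def by auto
    then obtain a b where ab: "e = {a, b}" "a < n" "b < n" by (auto simp: card_2_iff)
    have "e \<subseteq> component n X a" using ab e edge_in_comp comp_self by auto
    moreover have "component n X a \<in> \<C>" unfolding \<C>_def using ab by auto
    ultimately obtain G where "G \<in> \<G>" "e \<subseteq> G" using G(5) by blast
    then show "e \<in> (\<Union>G\<in>\<G>. {e\<in>Hn. e \<subseteq> G})" using eH by auto
  qed
  have finH: "finite Hn"
  proof -
    have "Hn \<subseteq> Pow {..<n}" using sg unfolding simple_graph_on_def by auto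
    then show ?thesis by (rule finite_subset) auto
  qed
  have "card X \<le> card (\<Union>G\<in>\<G>. {e\<in>Hn. e \<subseteq> G})"
    using sub finH G(1) by (intro card_mono) auto
  also have "\<dots> \<le> (\<Sum>G\<in>\<G>. card {e\<in>Hn. e \<subseteq> G})" by (rule card_UN_le[OF G(1)])
  finally have "real (card X) \<le> real (\<Sum>G\<in>\<G>. induced_edges Hn G)"
    unfolding induced_edges_def by linarith
  also have "\<dots> = (\<Sum>G\<in>\<G>. real (induced_edges Hn G))" by (rule of_nat_sum)
  also have "\<dots> \<le> (\<Sum>G\<in>\<G>. q * real (card G)^2 / 2 + D)"
  proof (intro sum_mono)
    fix G assume "G \<in> \<G>"
    then have "G \<subseteq> {..<n}" using G(3) UC by auto
    then show "real (induced_edges Hn G) \<le> q * real (card G)^2 / 2 + D" using Db by auto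
  qed
  also have "\<dots> = q / 2 * (\<Sum>G\<in>\<G>. real (card G)^2) + real (card \<G>) * D"
    by (simp add: sum.distrib sum_distrib_left sum_divide_distrib)
  also have "\<dots> \<le> q / 2 * (real r * x^2 + (real n - real r * x)^2) + (2 * real n / x + 1) * D"
  proof -
    have "\<forall>r::nat. real r * x \<le> (\<Sum>G\<in>\<G>. real (card G)) \<and> (\<Sum>G\<in>\<G>. real (card G)) \<le> (real r + 1) * x \<longrightarrow>
           (\<Sum>G\<in>\<G>. (real (card G))^2) \<le> real r * x^2 + ((\<Sum>G\<in>\<G>. real (card G)) - real r * x)^2"
      using G(4) by (intro sq_sum_bound[OF G(1) x]) auto
    from this[rule_format, of r] have s1: "(\<Sum>G\<in>\<G>. real (card G)^2) \<le> real r * x^2 + (real n - real r * x)^2"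
      unfolding sumG using r by blast
    have s2: "q / 2 * (\<Sum>G\<in>\<G>. real (card G)^2) \<le> q / 2 * (real r * x^2 + (real n - real r * x)^2)"
      using s1 q by (intro mult_left_mono) auto
    have s3: "real (card \<G>) * D \<le> (2 * real n / x + 1) * D"
      using cG D by (intro mult_right_mono) auto
    show ?thesis using s2 s3 by linarith
  qed
  finally show ?thesis .
qed


lemma pmf_prob_mono_support:
  assumes "\<And>x. x \<in> set_pmf M \<Longrightarrow> x \<in> A \<Longrightarrow> x \<in> B"
  shows "measure_pmf.prob M A \<le> measure_pmf.prob M B"
proof -
  have "measure_pmf.prob M A = measure_pmf.prob M (A \<inter> set_pmf M)"
    by (simp add: measure_Int_set_pmf)
  also have "\<dots> \<le> measure_pmf.prob M B"
    using assms by (intro measure_pmf.finite_measure_mono) auto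
  finally show ?thesis .
qed

lemma pmf_integrable_bdd:
  fixes g :: "'a \<Rightarrow> real"
  assumes "\<And>x. \<bar>g x\<bar> \<le> B"
  shows "integrable (measure_pmf M) g"
  by (rule measure_pmf.integrable_const_bound[where B=B]) (use assms in auto)

lemma pmf_integral_indicator:
  "measure_pmf.expectation M (indicator A :: 'a \<Rightarrow> real) = measure_pmf.prob M A"
  by simp

lemma second_moment_pmf:
  fixes M :: "'a pmf" and E :: "'i \<Rightarrow> 'a set" and Bad :: "('i \<times> 'i) set"
  assumes fin: "finite I" and t: "t > 0"
    and good: "\<And>j k. j \<in> I \<Longrightarrow> k \<in> I \<Longrightarrow> (j,k) \<notin> Bad \<Longrightarrow>
        measure_pmf.prob M (E j \<inter> E k) \<le> measure_pmf.prob M (E j) * measure_pmf.prob M (E k)"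
  shows "measure_pmf.prob M {x. t \<le> \<bar>(\<Sum>j\<in>I. indicator (E j) x) - (\<Sum>j\<in>I. measure_pmf.prob M (E j))\<bar>}
           \<le> real (card (Bad \<inter> I \<times> I)) / t^2"
proof -
  define P where "P j = measure_pmf.prob M (E j)" for j
  define f :: "'a \<Rightarrow> real" where "f x = (\<Sum>j\<in>I. indicator (E j) x)" for x
  define g where "g j k x = (indicator (E j \<inter> E k) x - P k * indicator (E j) x - P j * indicator (E k) x + P j * P k :: real)" for j k x
  have intg_ind: "integrable (measure_pmf M) (indicator A :: 'a \<Rightarrow> real)" for A
    by (rule pmf_integrable_bdd[where B=1]) (auto simp: indicator_def)
  have Ef: "measure_pmf.expectation M f = (\<Sum>j\<in>I. P j)"
    unfolding f_def P_def by (subst Bochner_Integration.integral_sum) (auto intro: intg_ind)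
  have sq: "(f x - (\<Sum>j\<in>I. P j))^2 = (\<Sum>j\<in>I. \<Sum>k\<in>I. g j k x)" for x
  proof -
    have "f x - (\<Sum>j\<in>I. P j) = (\<Sum>j\<in>I. indicator (E j) x - P j)"
      unfolding f_def by (simp add: sum_subtractf)
    then have "(f x - (\<Sum>j\<in>I. P j))^2 = (\<Sum>j\<in>I. \<Sum>k\<in>I. (indicator (E j) x - P j) * (indicator (E k) x - P k))"
      by (simp add: power2_eq_square sum_product)
    also have "\<dots> = (\<Sum>j\<in>I. \<Sum>k\<in>I. g j k x)"
      unfolding g_def by (intro sum.cong refl) (simp add: indicator_inter_arith algebra_simps)
    finally show ?thesis .
  qed
  have intg_g: "integrable (measure_pmf M) (g j k)" for j k
    unfolding g_def by (intro Bochner_Integration.integrable_add Bochner_Integration.integrable_diff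
        integrable_mult_right intg_ind) auto
  have Eg: "measure_pmf.expectation M (g j k) = measure_pmf.prob M (E j \<inter> E k) - P j * P k" for j k
    unfolding g_def
    by (subst Bochner_Integration.integral_add Bochner_Integration.integral_diff integral_mult_right;
        (auto intro!: Bochner_Integration.integrable_add Bochner_Integration.integrable_diff
        integrable_mult_right intg_ind simp: P_def)?)+
  have var: "measure_pmf.variance M f = (\<Sum>j\<in>I. \<Sum>k\<in>I. measure_pmf.prob M (E j \<inter> E k) - P j * P k)"
  proof -
    have "measure_pmf.variance M f = measure_pmf.expectation M (\<lambda>x. \<Sum>j\<in>I. \<Sum>k\<in>I. g j k x)"
      unfolding Ef sq by simp
    also have "\<dots> = (\<Sum>j\<in>I. \<Sum>k\<in>I. measure_pmf.expectation M (g j k))"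
      by (subst Bochner_Integration.integral_sum, auto intro!: Bochner_Integration.integrable_sum intg_g)
         (subst Bochner_Integration.integral_sum, auto intro!: intg_g)
    finally show ?thesis by (simp add: Eg)
  qed
  have varb: "measure_pmf.variance M f \<le> real (card (Bad \<inter> I \<times> I))"
  proof -
    have "(\<Sum>j\<in>I. \<Sum>k\<in>I. measure_pmf.prob M (E j \<inter> E k) - P j * P k)
          \<le> (\<Sum>j\<in>I. \<Sum>k\<in>I. (if (j,k) \<in> Bad then 1 else 0 :: real))"
    proof (intro sum_mono)
      fix j k assume jk: "j \<in> I" "k \<in> I"
      show "measure_pmf.prob M (E j \<inter> E k) - P j * P k \<le> (if (j,k) \<in> Bad then 1 else 0)"
      proof (cases "(j,k) \<in> Bad")
        case True
        have "P j * P k \<ge> 0" unfolding P_def by simp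
        moreover have "measure_pmf.prob M (E j \<inter> E k) \<le> 1" by simp
        ultimately show ?thesis using True by (simp only: if_True)
      next
        case False
        then show ?thesis using good[OF jk False] unfolding P_def by simp
      qed
    qed
    also have "\<dots> = (\<Sum>jk\<in>I \<times> I. (if jk \<in> Bad then 1 else 0 :: real))"
      by (simp add: sum.cartesian_product)
    also have "\<dots> = real (card (Bad \<inter> I \<times> I))"
    proof -
      have "(\<Sum>jk\<in>I \<times> I. (if jk \<in> Bad then 1 else 0 :: real)) = (\<Sum>jk\<in>I \<times> I \<inter> Bad. 1)"
        using fin by (subst sum.inter_restrict) auto
      also have "\<dots> = real (card (Bad \<inter> I \<times> I))" by (simp add: Int_commute)
      finally show ?thesis .
    qed
    finally show ?thesis using var by simp
  qed
  have intf2: "integrable (measure_pmf M) (\<lambda>x. f x ^ 2)"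
  proof -
    have "\<bar>f x\<bar> \<le> real (card I)" for x
    proof -
      have "\<bar>f x\<bar> \<le> (\<Sum>j\<in>I. \<bar>indicator (E j) x :: real\<bar>)" unfolding f_def by (rule sum_abs)
      also have "\<dots> \<le> (\<Sum>j\<in>I. 1)" by (intro sum_mono) (auto simp: indicator_def)
      finally show ?thesis by simp
    qed
    then have "\<bar>f x ^ 2\<bar> \<le> real (card I) ^ 2" for x
    proof -
      have "\<bar>f x\<bar> ^ 2 \<le> real (card I) ^ 2" by (rule power_mono) (use \<open>\<And>x. \<bar>f x\<bar> \<le> real (card I)\<close> in auto)
      then show ?thesis by (simp add: power2_abs)
    qed
    then show ?thesis by (rule pmf_integrable_bdd)
  qed
  have "measure_pmf.prob M {x \<in> space (measure_pmf M). t \<le> \<bar>f x - measure_pmf.expectation M f\<bar>}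
        \<le> measure_pmf.variance M f / t^2"
    by (rule measure_pmf.Chebyshev_inequality) (use intf2 t in auto)
  also have "\<dots> \<le> real (card (Bad \<inter> I \<times> I)) / t^2"
    using varb t by (intro divide_right_mono) auto
  finally show ?thesis unfolding Ef f_def P_def by simp
qed


lemma disc_finite: "finite {\<bar>real (induced_edges H U) - q * real (card U)^2 / 2\<bar> | U. U \<subseteq> {..<n}}"
proof -
  have "{\<bar>real (induced_edges H U) - q * real (card U)^2 / 2\<bar> | U. U \<subseteq> {..<n}}
        = (\<lambda>U. \<bar>real (induced_edges H U) - q * real (card U)^2 / 2\<bar>) ` Pow {..<n}" by auto
  then show ?thesis by simp
qed

lemma disc_ge:
  assumes "U \<subseteq> {..<n}"
  shows "\<bar>real (induced_edges H U) - q * real (card U)^2 / 2\<bar> \<le> discrepancy n H q"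
  unfolding discrepancy_def using assms by (intro Max_ge[OF disc_finite]) auto

lemma disc_nonneg: "0 \<le> discrepancy n H q"
  using disc_ge[of "{}" n H q] abs_ge_zero[of "real (induced_edges H {}) - q * real (card {})^2 / 2"]
  by (meson empty_subsetI order_trans)

lemma simple_graph_finite:
  assumes "simple_graph_on n Hn" shows "finite Hn"
proof -
  have "Hn \<subseteq> Pow {..<n}" using assms unfolding simple_graph_on_def by auto
  then show ?thesis by (rule finite_subset) auto
qed

lemma induced_all:
  assumes "simple_graph_on n Hn" shows "induced_edges Hn {..<n} = card Hn"
proof -
  have "{e\<in>Hn. e \<subseteq> {..<n}} = Hn" using assms unfolding simple_graph_on_def by auto
  then show ?thesis unfolding induced_edges_def by simp
qed

lemma edges_at_vertex:
  assumes "simple_graph_on n Hn"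
  shows "card {f\<in>Hn. a \<in> f} \<le> n"
proof -
  have "{f\<in>Hn. a \<in> f} \<subseteq> (\<lambda>w. {a, w}) ` {..<n}"
  proof
    fix f assume f: "f \<in> {f\<in>Hn. a \<in> f}"
    then have "f \<subseteq> {..<n}" "card f = 2" using assms unfolding simple_graph_on_def by auto
    then obtain u w where uw: "f = {u, w}" "u \<noteq> w" "u < n" "w < n" by (auto simp: card_2_iff)
    have "a = u \<or> a = w" using f uw by auto
    then show "f \<in> (\<lambda>w. {a, w}) ` {..<n}" using uw by (auto simp: insert_commute)
  qed
  then have "card {f\<in>Hn. a \<in> f} \<le> card ((\<lambda>w. {a, w}) ` {..<n})" by (intro card_mono) auto
  also have "\<dots> \<le> n" using card_image_le[of "{..<n}" "\<lambda>w. {a, w}"] by simp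
  finally show ?thesis .
qed

lemma bad_pairs_count:
  assumes "simple_graph_on n Hn"
  shows "card ({(e, f). e \<inter> f \<noteq> {}} \<inter> Hn \<times> Hn) \<le> 2 * n * card Hn"
proof -
  have fin: "finite Hn" using simple_graph_finite[OF assms] .
  have "{(e, f). e \<inter> f \<noteq> {}} \<inter> Hn \<times> Hn = Sigma Hn (\<lambda>e. {f\<in>Hn. e \<inter> f \<noteq> {}})" by auto
  then have "card ({(e, f). e \<inter> f \<noteq> {}} \<inter> Hn \<times> Hn) = (\<Sum>e\<in>Hn. card {f\<in>Hn. e \<inter> f \<noteq> {}})"
    using fin by (simp add: card_SigmaI)
  also have "\<dots> \<le> (\<Sum>e\<in>Hn. 2 * n)"
  proof (intro sum_mono)
    fix e assume "e \<in> Hn"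
    then have "card e = 2" using assms unfolding simple_graph_on_def by auto
    then obtain a b where ab: "e = {a, b}" by (auto simp: card_2_iff)
    have "{f\<in>Hn. e \<inter> f \<noteq> {}} \<subseteq> {f\<in>Hn. a \<in> f} \<union> {f\<in>Hn. b \<in> f}" using ab by auto
    then have "card {f\<in>Hn. e \<inter> f \<noteq> {}} \<le> card ({f\<in>Hn. a \<in> f} \<union> {f\<in>Hn. b \<in> f})"
      using fin by (intro card_mono) auto
    also have "\<dots> \<le> card {f\<in>Hn. a \<in> f} + card {f\<in>Hn. b \<in> f}" by (rule card_Un_le)
    also have "\<dots> \<le> 2 * n" using edges_at_vertex[OF assms, of a] edges_at_vertex[OF assms, of b] by simp
    finally show "card {f\<in>Hn. e \<inter> f \<noteq> {}} \<le> 2 * n" .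
  qed
  also have "\<dots> = 2 * n * card Hn" by simp
  finally show ?thesis .
qed

lemma part1_n:
  fixes x \<delta> :: real
  assumes mu: "\<mu> \<in> M1p Hn p" and sg: "simple_graph_on n Hn" and \<delta>: "\<delta> > 0" and Hpos: "card Hn > 0"
    and det: "\<forall>X\<subseteq>Hn. (\<forall>v<n. real (card (component n X v)) \<le> x) \<longrightarrow> real (card X) \<le> (p - \<delta>) * real (card Hn)"
  shows "measure_pmf.prob \<mu> {X. \<forall>v<n. real (card (component n X v)) \<le> x} \<le> 2 * real n / (\<delta>^2 * real (card Hn))"
proof -
  have fin: "finite Hn" using simple_graph_finite[OF sg] .
  define E where "E e = {X. e \<in> X}" for e :: "nat set"
  have supp: "set_pmf \<mu> \<subseteq> Pow Hn" and ind: "one_independent Hn \<mu>"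
    and pe: "\<And>e. e \<in> Hn \<Longrightarrow> measure_pmf.prob \<mu> {X. e \<in> X} = p"
    using mu unfolding M1p_def by auto
  let ?t = "\<delta> * real (card Hn)"
  have t: "?t > 0" using \<delta> Hpos by simp
  have sumP: "(\<Sum>e\<in>Hn. measure_pmf.prob \<mu> (E e)) = p * real (card Hn)"
    unfolding E_def using pe by simp
  have sumI: "(\<Sum>e\<in>Hn. indicator (E e) X) = real (card X)" if "X \<subseteq> Hn" for X
  proof -
    have "(\<Sum>e\<in>Hn. indicator (E e) X) = (\<Sum>e\<in>Hn. indicator X e :: real)"
      unfolding E_def by (intro sum.cong) (auto simp: indicator_def)
    also have "\<dots> = real (card (Hn \<inter> X))" using sum.inter_restrict[OF fin, of "\<lambda>_. 1::real" X] by (simp add: indicator_def of_bool_def)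
    finally show ?thesis using that by (simp add: Int_absorb1)
  qed
  have good: "measure_pmf.prob \<mu> (E e \<inter> E f) \<le> measure_pmf.prob \<mu> (E e) * measure_pmf.prob \<mu> (E f)"
    if "e \<in> Hn" "f \<in> Hn" "(e, f) \<notin> {(e, f). e \<inter> f \<noteq> {}}" for e f
  proof -
    have U: "\<Union>{e} \<inter> \<Union>{f} = {}" using that by auto
    have "measure_pmf.prob \<mu> {X. X \<inter> {e} = {e} \<and> X \<inter> {f} = {f}}
        = measure_pmf.prob \<mu> {X. X \<inter> {e} = {e}} * measure_pmf.prob \<mu> {X. X \<inter> {f} = {f}}"
      by (rule ind[unfolded one_independent_def, rule_format, of "{e}" "{f}" "{e}" "{f}"]) (use that U in auto)
    moreover have "{X. X \<inter> {e} = {e} \<and> X \<inter> {f} = {f}} = E e \<inter> E f" unfolding E_def by auto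
    moreover have "{X. X \<inter> {e} = {e}} = E e" "{X. X \<inter> {f} = {f}} = E f" unfolding E_def by auto
    ultimately show ?thesis by simp
  qed
  have "measure_pmf.prob \<mu> {X. \<forall>v<n. real (card (component n X v)) \<le> x}
      \<le> measure_pmf.prob \<mu> {X. ?t \<le> \<bar>(\<Sum>e\<in>Hn. indicator (E e) X) - (\<Sum>e\<in>Hn. measure_pmf.prob \<mu> (E e))\<bar>}"
  proof (rule pmf_prob_mono_support)
    fix X assume X: "X \<in> set_pmf \<mu>" "X \<in> {X. \<forall>v<n. real (card (component n X v)) \<le> x}"
    then have XH: "X \<subseteq> Hn" using supp by auto
    then have "real (card X) \<le> (p - \<delta>) * real (card Hn)" using det X by auto
    then show "X \<in> {X. ?t \<le> \<bar>(\<Sum>e\<in>Hn. indicator (E e) X) - (\<Sum>e\<in>Hn. measure_pmf.prob \<mu> (E e))\<bar>}"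
      using sumI[OF XH] sumP by (simp add: algebra_simps)
  qed
  also have "\<dots> \<le> real (card ({(e, f). e \<inter> f \<noteq> {}} \<inter> Hn \<times> Hn)) / ?t^2"
    by (rule second_moment_pmf[OF fin t good]) auto
  also have "\<dots> \<le> real (2 * n * card Hn) / ?t^2"
  proof (intro divide_right_mono)
    show "real (card ({(e, f). e \<inter> f \<noteq> {}} \<inter> Hn \<times> Hn)) \<le> real (2 * n * card Hn)"
      using bad_pairs_count[OF sg] by (simp only: of_nat_le_iff)
  qed simp
  also have "\<dots> = 2 * real n / (\<delta>^2 * real (card Hn))"
    using Hpos \<delta> by (simp add: power2_eq_square field_simps)
  finally show ?thesis .
qed


lemma c_props:
  fixes r :: nat and p c :: real
  assumes r: "r \<ge> 1" and p1: "1 / real (r + 1) < p" and p2: "p \<le> 1 / real r"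
    and c: "c = (1 + sqrt ((real (r + 1) * p - 1) / real r)) / real (r + 1)"
  shows "1 / real (r + 1) < c" "c \<le> 1 / real r" "real r * c^2 + (1 - real r * c)^2 = p"
proof -
  define s where "s = sqrt ((real (r + 1) * p - 1) / real r)"
  have rpos: "real r > 0" using r by simp
  have arg: "(real (r + 1) * p - 1) / real r > 0"
    using p1 rpos by (simp add: field_simps)
  have s2: "s^2 = (real (r + 1) * p - 1) / real r" unfolding s_def using arg by simp
  have spos: "s > 0" unfolding s_def using arg by simp
  have cs: "c * real (r + 1) = 1 + s" unfolding c s_def by simp
  show "1 / real (r + 1) < c" using cs spos by (simp add: field_simps)
  have "s^2 \<le> (1 / real r)^2"
  proof -
    have "real (r + 1) * p \<le> real (r + 1) * (1 / real r)"
      using p2 by (intro mult_left_mono) auto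
    then have "real (r + 1) * p - 1 \<le> real (r + 1) / real r - 1" by simp
    also have "\<dots> = 1 / real r" using rpos by (simp add: field_simps)
    finally have "(real (r + 1) * p - 1) / real r \<le> (1 / real r) / real r"
      using rpos by (intro divide_right_mono) auto
    then show ?thesis using s2 by (simp add: power2_eq_square)
  qed
  then have "s \<le> 1 / real r" by (rule power2_le_imp_le) (use rpos in simp)
  then have "c * real (r + 1) \<le> 1 + 1 / real r" using cs by linarith
  also have "1 + 1 / real r = (1 / real r) * real (r + 1)" using rpos by (simp add: field_simps)
  finally have "c * real (r + 1) \<le> (1 / real r) * real (r + 1)" .
  then show "c \<le> 1 / real r" by (rule mult_right_le_imp_le) simp
  have "real (r + 1) * (real r * c^2 + (1 - real r * c)^2) = real r * (c * real (r + 1))^2 - 2 * real r * (c * real (r + 1)) + real (r + 1)"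
    by (simp add: power2_eq_square algebra_simps)
  also have "\<dots> = real r * s^2 + 1" unfolding cs by (simp add: power2_eq_square algebra_simps)
  also have "\<dots> = real (r + 1) * p" unfolding s2 using rpos by simp
  finally have "real (r + 1) * (real r * c^2 + (1 - real r * c)^2) = real (r + 1) * p" .
  then show "real r * c^2 + (1 - real r * c)^2 = p" by (subst (asm) mult_cancel_left) simp
qed

lemma f_strict:
  fixes r :: nat and y z :: real
  assumes r: "r \<ge> 1" and y: "1 / real (r + 1) \<le> y" and yz: "y < z"
  shows "real r * y^2 + (1 - real r * y)^2 < real r * z^2 + (1 - real r * z)^2"
proof -
  have eq: "(real r * z^2 + (1 - real r * z)^2) - (real r * y^2 + (1 - real r * y)^2)
      = (z - y) * (real r * (real r + 1) * (z + y) - 2 * real r)"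
    by (simp add: power2_eq_square algebra_simps)
  have y1: "(real r + 1) * y \<ge> 1" using y by (simp add: field_simps)
  have "(real r + 1) * z > (real r + 1) * y" using yz by (intro mult_strict_left_mono) auto
  then have "(real r + 1) * (z + y) > 2" using y1 unfolding distrib_left by linarith
  then have "real r * ((real r + 1) * (z + y)) > real r * 2" using r by (intro mult_strict_left_mono) auto
  then have "real r * (real r + 1) * (z + y) - 2 * real r > 0" by (simp add: algebra_simps)
  then have "(z - y) * (real r * (real r + 1) * (z + y) - 2 * real r) > 0" using yz by simp
  then show ?thesis using eq by linarith
qed


lemma comp_le_largest:
  assumes "v < n"
  shows "card (component n X v) \<le> largest_component_size n X"
  unfolding largest_component_size_def using assms by (intro Max_ge) auto

lemma part1_step:
  fixes r :: nat and p c c' \<epsilon> Q F \<delta> K \<eta> :: real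
  assumes r: "r \<ge> 1" and sg: "simple_graph_on n Hn" and mu: "\<mu> \<in> M1p Hn p"
    and n2: "n \<ge> 2" and lq: "\<bar>ln (real n) / real n\<bar> \<le> 1 * \<bar>Q\<bar>"
    and D4: "\<bar>discrepancy n Hn Q\<bar> \<le> 1/4 * \<bar>Q * real n ^ 2\<bar>"
    and D\<eta>: "\<bar>discrepancy n Hn Q\<bar> \<le> \<eta> * \<bar>Q * real n ^ 2\<bar>"
    and c'1: "1 / real (r + 1) \<le> c'" and c'2: "c' \<le> 1 / real r"
    and Fdef: "F = real r * c'^2 + (1 - real r * c')^2" and Fp: "F < p"
    and \<delta>def: "\<delta> = (p - F) / 2" and Kdef: "K = 2 / c' + 1" and \<eta>def: "\<eta> = \<delta> / (2 * (K + p))"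
    and thr: "(1 - \<epsilon>) * c \<le> c'"
  shows "1 - 8 / \<delta>^2 * (1 / ln (real n)) \<le>
         measure_pmf.prob \<mu> {X. real (largest_component_size n X) \<ge> (1 - \<epsilon>) * c * real n}"
proof -
  define D where "D = discrepancy n Hn Q"
  define A where "A = Q * real n ^ 2"
  have Dnn: "D \<ge> 0" unfolding D_def by (rule disc_nonneg)
  have npos: "real n > 0" "real n ^ 2 > 0" using n2 by auto
  have lnpos: "ln (real n) > 0" using n2 by simp
  have Qne: "\<bar>Q\<bar> > 0"
  proof -
    have h: "ln (real n) / real n > 0" using lnpos npos by simp
    then have "\<bar>ln (real n) / real n\<bar> = ln (real n) / real n" by (rule abs_of_pos)
    then show ?thesis using lq h by linarith
  qed
  have Dge: "\<bar>real (card Hn) - Q * real n ^ 2 / 2\<bar> \<le> D"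
    using disc_ge[of "{..<n}" n Hn Q] induced_all[OF sg] unfolding D_def by simp
  have Qpos: "Q > 0"
  proof (rule ccontr)
    assume "\<not> Q > 0"
    then have Qn: "Q < 0" using Qne by auto
    have Aneg: "A < 0" unfolding A_def using npos Qn by (simp add: mult_neg_pos)
    then have aA: "\<bar>A\<bar> = - A" by simp
    have "D \<le> 1/4 * \<bar>A\<bar>" using D4 Dnn unfolding A_def D_def by simp
    moreover have "- A / 2 \<le> D" using Dge unfolding A_def by linarith
    ultimately show False using aA Aneg by linarith
  qed
  have Apos: "A > 0" unfolding A_def using Qpos npos by simp
  have DA: "D \<le> \<eta> * A" using D\<eta> Dnn Apos unfolding A_def D_def by simp
  have DA4: "D \<le> A / 4" using D4 Dnn Apos unfolding A_def D_def by simp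
  have cardH: "real (card Hn) \<ge> A / 4" using Dge DA4 unfolding A_def by linarith
  have Hpos: "card Hn > 0" using cardH Apos by (cases "card Hn = 0") auto
  have rpos: "real r > 0" using r by simp
  have c'pos: "c' > 0" using c'1 by (rule order.strict_trans2[rotated]) simp
  have Fnn: "F \<ge> 0" unfolding Fdef by simp
  have \<delta>pos: "\<delta> > 0" using Fp \<delta>def by simp
  have ppos: "p > 0" using Fp Fnn by simp
  have "2 / c' > 0" using c'pos by simp
  then have Kpos: "K > 0" using Kdef by linarith
  have \<eta>A: "(K + p) * D \<le> \<delta> * A / 2"
  proof -
    have "(K + p) * D \<le> (K + p) * (\<eta> * A)" using DA Kpos ppos by (intro mult_left_mono) auto
    also have "\<dots> = \<delta> * A / 2" unfolding \<eta>def using Kpos ppos by (simp add: field_simps)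
    finally show ?thesis .
  qed
  have det: "\<forall>X\<subseteq>Hn. (\<forall>v<n. real (card (component n X v)) \<le> c' * real n) \<longrightarrow>
              real (card X) \<le> (p - \<delta>) * real (card Hn)"
  proof (intro allI impI)
    fix X assume XH: "X \<subseteq> Hn" and comp: "\<forall>v<n. real (card (component n X v)) \<le> c' * real n"
    have Db: "\<forall>U\<subseteq>{..<n}. real (induced_edges Hn U) \<le> Q * real (card U)^2 / 2 + D"
    proof (intro allI impI)
      fix U assume "U \<subseteq> {..<n}"
      from disc_ge[OF this, of Hn Q] show "real (induced_edges Hn U) \<le> Q * real (card U)^2 / 2 + D"
        unfolding D_def by (simp add: abs_le_iff)
    qed
    have r1: "real r * (c' * real n) \<le> real n"
    proof -
      have "real r * c' \<le> 1" using c'2 rpos by (simp add: field_simps)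
      then have "real r * c' * real n \<le> 1 * real n" using npos by (intro mult_right_mono) auto
      then show ?thesis by (simp add: mult.assoc)
    qed
    have r2: "real n \<le> (real r + 1) * (c' * real n)"
    proof -
      have "1 \<le> (real r + 1) * c'" using c'1 by (simp add: field_simps)
      then have "1 * real n \<le> (real r + 1) * c' * real n" using npos by (intro mult_right_mono) auto
      then show ?thesis by (simp add: mult.assoc)
    qed
    have fe: "real (card X) \<le> Q / 2 * (real r * (c' * real n)^2 + (real n - real r * (c' * real n))^2)
               + (2 * real n / (c' * real n) + 1) * D"
      by (rule few_edges[OF sg XH _ comp Db _ Dnn r1 r2]) (use c'pos npos Qpos in auto)
    have e1: "Q / 2 * (real r * (c' * real n)^2 + (real n - real r * (c' * real n))^2) = A * F / 2"
      unfolding A_def Fdef by (simp add: power2_eq_square algebra_simps)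
    have e2: "2 * real n / (c' * real n) + 1 = K" unfolding Kdef using npos by simp
    have "real (card X) \<le> A * F / 2 + K * D" using fe e1 e2 by simp
    also have "\<dots> \<le> (p - \<delta>) * (A / 2 - D)"
    proof -
      have pd: "p - \<delta> = F + \<delta>" using \<delta>def by simp
      have "(p - \<delta>) * (A / 2 - D) - (A * F / 2 + K * D) = \<delta> * A / 2 - (F + \<delta> + K) * D"
        unfolding pd by (simp add: algebra_simps)
      moreover have "(F + \<delta> + K) * D \<le> (K + p) * D" using Dnn pd Fp \<delta>pos
        by (intro mult_right_mono) auto
      ultimately show ?thesis using \<eta>A by linarith
    qed
    also have "\<dots> \<le> (p - \<delta>) * real (card Hn)"
      using Dge \<delta>def Fnn ppos by (intro mult_left_mono) (auto simp: A_def abs_le_iff)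
    finally show "real (card X) \<le> (p - \<delta>) * real (card Hn)" .
  qed
  have pb: "measure_pmf.prob \<mu> {X. \<forall>v<n. real (card (component n X v)) \<le> c' * real n}
            \<le> 2 * real n / (\<delta>^2 * real (card Hn))"
    by (rule part1_n[OF mu sg \<delta>pos Hpos det])
  also have "\<dots> \<le> 2 * real n / (\<delta>^2 * (A / 4))"
    using cardH Apos \<delta>pos npos by (intro divide_left_mono mult_left_mono mult_pos_pos) auto
  also have "\<dots> = 8 / \<delta>^2 * (1 / (Q * real n))"
    unfolding A_def using npos Qpos \<delta>pos by (simp add: power2_eq_square field_simps)
  also have "\<dots> \<le> 8 / \<delta>^2 * (1 / ln (real n))"
  proof -
    have "\<bar>ln (real n) / real n\<bar> = ln (real n) / real n" using lnpos npos by (intro abs_of_nonneg) simp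
    then have "ln (real n) / real n \<le> Q" using lq Qpos by linarith
    then have "ln (real n) \<le> Q * real n" using npos by (simp add: divide_le_eq)
    then show ?thesis using lnpos \<delta>pos by (intro mult_left_mono divide_left_mono) auto
  qed
  finally have pb2: "measure_pmf.prob \<mu> {X. \<forall>v<n. real (card (component n X v)) \<le> c' * real n}
      \<le> 8 / \<delta>^2 * (1 / ln (real n))" .
  let ?G = "{X. real (largest_component_size n X) \<ge> (1 - \<epsilon>) * c * real n}"
  have "measure_pmf.prob \<mu> (UNIV - ?G) \<le> measure_pmf.prob \<mu> {X. \<forall>v<n. real (card (component n X v)) \<le> c' * real n}"
  proof (rule pmf_prob_mono_support)
    fix X assume "X \<in> UNIV - ?G"
    then have L: "real (largest_component_size n X) < (1 - \<epsilon>) * c * real n" by auto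
    have T: "(1 - \<epsilon>) * c * real n \<le> c' * real n" using thr npos by (intro mult_right_mono) auto
    have "real (card (component n X v)) \<le> c' * real n" if "v < n" for v
    proof -
      have "real (card (component n X v)) \<le> real (largest_component_size n X)"
        using comp_le_largest[OF that, of X] by simp
      then show ?thesis using L T by linarith
    qed
    then show "X \<in> {X. \<forall>v<n. real (card (component n X v)) \<le> c' * real n}" by auto
  qed
  moreover have "measure_pmf.prob \<mu> (UNIV - ?G) = 1 - measure_pmf.prob \<mu> ?G"
    using measure_pmf.prob_compl[of ?G \<mu>] by simp
  ultimately show ?thesis using pb2 by linarith
qed


lemma part1:
  fixes r :: nat and p c \<epsilon> :: real and H :: "nat \<Rightarrow> nat set set" and q :: "nat \<Rightarrow> real"
    and \<mu> :: "nat \<Rightarrow> nat set set pmf"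
  assumes r: "r \<ge> 1" and p1: "1 / real (r + 1) < p" and p2: "p \<le> 1 / real r"
    and wp: "weakly_pseudorandom H q" and lq: "(\<lambda>n. ln (real n) / real n) \<in> o(q)"
    and c: "c = (1 + sqrt ((real (r + 1) * p - 1) / real r)) / real (r + 1)"
    and mu: "\<forall>n. \<mu> n \<in> M1p (H n) p" and eps: "\<epsilon> > 0"
  shows "(\<lambda>n. measure_pmf.prob (\<mu> n) {X. real (largest_component_size n X) \<ge> (1 - \<epsilon>) * c * real n}) \<longlonglongrightarrow> 1"
proof -
  have cp: "1 / real (r + 1) < c" "c \<le> 1 / real r" "real r * c^2 + (1 - real r * c)^2 = p"
    using c_props[OF r p1 p2 c] by auto
  have cpos: "c > 0" using cp(1) by (rule order.strict_trans[rotated]) simp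
  define \<epsilon>0 where "\<epsilon>0 = 1 - 1 / (real (r + 1) * c)"
  have rc: "real (r + 1) * c > 1" using cp(1) by (simp add: field_simps)
  have e0: "\<epsilon>0 > 0" unfolding \<epsilon>0_def using rc by simp
  define e' where "e' = min \<epsilon> \<epsilon>0"
  have e'pos: "e' > 0" using eps e0 by (simp add: e'_def)
  define c' where "c' = (1 - e') * c"
  have c'c: "c' < c" unfolding c'_def using e'pos cpos by simp
  have c'1: "1 / real (r + 1) \<le> c'"
  proof -
    have "(1 - \<epsilon>0) * c = 1 / real (r + 1)" unfolding \<epsilon>0_def using rc by (simp add: field_simps)
    moreover have "(1 - \<epsilon>0) * c \<le> (1 - e') * c" using cpos by (intro mult_right_mono) (auto simp: e'_def)
    ultimately show ?thesis unfolding c'_def by simp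
  qed
  have c'2: "c' \<le> 1 / real r" using c'c cp(2) by simp
  define F where "F = real r * c'^2 + (1 - real r * c')^2"
  have Fp: "F < p" unfolding F_def using f_strict[OF r c'1 c'c] cp(3) by simp
  define \<delta> where "\<delta> = (p - F) / 2"
  define K where "K = 2 / c' + 1"
  define \<eta> where "\<eta> = \<delta> / (2 * (K + p))"
  have Fnn: "F \<ge> 0" unfolding F_def by simp
  have \<delta>pos: "\<delta> > 0" using Fp by (simp add: \<delta>_def)
  have c'pos: "c' > 0" using c'1 by (rule order.strict_trans2[rotated]) simp
  have "2 / c' > 0" using c'pos by simp
  then have Kpos: "K > 0" unfolding K_def by linarith
  have ppos: "p > 0" using Fp Fnn by simp
  have \<eta>pos: "\<eta> > 0" unfolding \<eta>_def using \<delta>pos Kpos ppos by simp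
  have thr: "(1 - \<epsilon>) * c \<le> c'" unfolding c'_def using cpos by (intro mult_right_mono) (auto simp: e'_def)
  from wp have sg: "\<forall>n. simple_graph_on n (H n)"
    and dsm: "(\<lambda>n. discrepancy n (H n) (q n)) \<in> o(\<lambda>n. q n * real n ^ 2)"
    unfolding weakly_pseudorandom_def by auto
  have ev1: "eventually (\<lambda>n. norm (discrepancy n (H n) (q n)) \<le> \<eta> * norm (q n * real n ^ 2)) sequentially"
    using landau_o.smallD[OF dsm \<eta>pos] .
  have ev2: "eventually (\<lambda>n. norm (discrepancy n (H n) (q n)) \<le> 1/4 * norm (q n * real n ^ 2)) sequentially"
    using landau_o.smallD[OF dsm, of "1/4"] by simp
  have ev3: "eventually (\<lambda>n. norm (ln (real n) / real n) \<le> 1 * norm (q n)) sequentially"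
    using landau_o.smallD[OF lq, of 1] by simp
  have ev4: "eventually (\<lambda>n. n \<ge> 2) sequentially" by (rule eventually_ge_at_top)
  have low: "eventually (\<lambda>n. 1 - 8 / \<delta>^2 * (1 / ln (real n)) \<le>
      measure_pmf.prob (\<mu> n) {X. real (largest_component_size n X) \<ge> (1 - \<epsilon>) * c * real n}) sequentially"
    using ev1 ev2 ev3 ev4
  proof eventually_elim
    case (elim n)
    show ?case
      by (rule part1_step[OF r spec[OF sg, of n] spec[OF mu, of n] elim(4) _ _ _ c'1 c'2 F_def Fp \<delta>_def K_def \<eta>_def thr])
         (use elim in \<open>auto simp: real_norm_def\<close>)
  qed
  have up: "eventually (\<lambda>n. measure_pmf.prob (\<mu> n) {X. real (largest_component_size n X) \<ge> (1 - \<epsilon>) * c * real n} \<le> 1) sequentially"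
    by simp
  have lim: "(\<lambda>n. 1 - 8 / \<delta>^2 * (1 / ln (real n))) \<longlonglongrightarrow> 1"
  proof -
    have "(\<lambda>n::nat. 1 / ln (real n)) \<longlonglongrightarrow> 0" by real_asymp
    then have "(\<lambda>n. 8 / \<delta>^2 * (1 / ln (real n))) \<longlonglongrightarrow> 8 / \<delta>^2 * 0" by (intro tendsto_mult tendsto_const)
    then have "(\<lambda>n. 1 - 8 / \<delta>^2 * (1 / ln (real n))) \<longlonglongrightarrow> 1 - 8 / \<delta>^2 * 0" by (intro tendsto_diff tendsto_const)
    then show ?thesis by simp
  qed
  show ?thesis by (rule tendsto_sandwich[OF low up lim tendsto_const])
qed


lemma pair_prob:
  "measure_pmf.prob (pair_pmf M N) (A \<times> B) = measure_pmf.prob M A * measure_pmf.prob N B"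
proof -
  have "measure_pmf.prob (pair_pmf M N) (A \<times> B) = measure_pmf.prob (pair_pmf M N) ((A \<times> B) \<inter> set_pmf (pair_pmf M N))"
    by (rule measure_Int_set_pmf[symmetric])
  also have "(A \<times> B) \<inter> set_pmf (pair_pmf M N) = (A \<inter> set_pmf M) \<times> (B \<inter> set_pmf N)"
    by (auto simp: set_pair_pmf)
  also have "measure_pmf.prob (pair_pmf M N) \<dots> = measure_pmf.prob M (A \<inter> set_pmf M) * measure_pmf.prob N (B \<inter> set_pmf N)"
    by (intro measure_pmf_prob_product) (auto intro: countable_subset[OF _ countable_set_pmf])
  also have "\<dots> = measure_pmf.prob M A * measure_pmf.prob N B"
    by (simp add: measure_Int_set_pmf)
  finally show ?thesis .
qed

lemma Pi_pmf_indep: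
  fixes dflt :: 'b and p :: "'a \<Rightarrow> 'b pmf" and F G :: "('a \<Rightarrow> 'b) set"
  assumes V: "finite V" and PV: "P \<subseteq> V" and QV: "Q \<subseteq> V" and PQ: "P \<inter> Q = {}"
    and F: "\<And>\<phi> \<psi>. (\<forall>x\<in>P. \<phi> x = \<psi> x) \<Longrightarrow> \<phi> \<in> F \<longleftrightarrow> \<psi> \<in> F"
    and G: "\<And>\<phi> \<psi>. (\<forall>x\<in>Q. \<phi> x = \<psi> x) \<Longrightarrow> \<phi> \<in> G \<longleftrightarrow> \<psi> \<in> G"
  shows "measure_pmf.prob (Pi_pmf V dflt p) (F \<inter> G) =
         measure_pmf.prob (Pi_pmf V dflt p) F * measure_pmf.prob (Pi_pmf V dflt p) G"
proof -
  define h :: "('a \<Rightarrow> 'b) \<times> ('a \<Rightarrow> 'b) \<Rightarrow> 'a \<Rightarrow> 'b" where "h = (\<lambda>(f, g) x. if x \<in> P then f x else g x)"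
  define MP where "MP = pair_pmf (Pi_pmf P dflt p) (Pi_pmf (V - P) dflt p)"
  have fP: "finite P" using V PV finite_subset by blast
  have VP: "V = P \<union> (V - P)" using PV by auto
  have eq: "Pi_pmf V dflt p = map_pmf h MP"
    unfolding h_def MP_def by (subst VP, rule Pi_pmf_union) (use fP V in auto)
  have hF: "h (f, g) \<in> F \<longleftrightarrow> f \<in> F" for f g by (rule F) (auto simp: h_def)
  have hG: "h (f, g) \<in> G \<longleftrightarrow> g \<in> G" for f g by (rule G) (use PQ in \<open>auto simp: h_def\<close>)
  have p1: "h -` (F \<inter> G) = F \<times> G" using hF hG by auto
  have p2: "h -` F = F \<times> UNIV" using hF by auto
  have p3: "h -` G = UNIV \<times> G" using hG by auto
  show ?thesis unfolding eq measure_map_pmf p1 p2 p3 MP_def pair_prob by simp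
qed


definition colw :: "nat \<Rightarrow> real \<Rightarrow> nat \<Rightarrow> real" where
  "colw r c i = (if i < r then c else if i = r then 1 - real r * c else 0)"

definition cold :: "nat \<Rightarrow> real \<Rightarrow> nat pmf" where
  "cold r c = embed_pmf (colw r c)"

definition Phi :: "nat \<Rightarrow> nat \<Rightarrow> real \<Rightarrow> (nat \<Rightarrow> nat) pmf" where
  "Phi n r c = Pi_pmf {..<n} 0 (\<lambda>_. cold r c)"

definition colgraph :: "nat set set \<Rightarrow> (nat \<Rightarrow> nat) \<Rightarrow> nat set set" where
  "colgraph Hn \<phi> = {e\<in>Hn. \<exists>i. \<forall>x\<in>e. \<phi> x = i}"

locale colsetup =
  fixes r :: nat and c :: real
  assumes r: "r \<ge> 1" and c1: "1 / real (r + 1) \<le> c" and c2: "c \<le> 1 / real r"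
begin

lemma rc: "real r * c \<le> 1" using c2 r by (simp add: field_simps)
lemma rc1: "(real r + 1) * c \<ge> 1" using c1 by (simp add: field_simps)
lemma cpos: "c > 0" using c1 by (rule order.strict_trans2[rotated]) simp

lemma colw_nonneg: "colw r c i \<ge> 0"
  unfolding colw_def using rc cpos by auto

lemma colw_le: "colw r c i \<le> c"
  unfolding colw_def using rc1 cpos by (auto simp: algebra_simps)

lemma colw_sum: "(\<Sum>i\<le>r. colw r c i) = 1"
proof -
  have "{..r} = insert r {..<r}" by auto
  then have "(\<Sum>i\<le>r. colw r c i) = colw r c r + (\<Sum>i<r. colw r c i)" by simp
  also have "(\<Sum>i<r. colw r c i) = (\<Sum>i<r. c)" by (intro sum.cong) (auto simp: colw_def)
  finally show ?thesis by (simp add: colw_def)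
qed

lemma colw_sq: "(\<Sum>i\<le>r. (colw r c i)^2) = real r * c^2 + (1 - real r * c)^2"
proof -
  have "{..r} = insert r {..<r}" by auto
  then have "(\<Sum>i\<le>r. (colw r c i)^2) = (colw r c r)^2 + (\<Sum>i<r. (colw r c i)^2)" by simp
  also have "(\<Sum>i<r. (colw r c i)^2) = (\<Sum>i<r. c^2)" by (intro sum.cong) (auto simp: colw_def)
  finally show ?thesis by (simp add: colw_def)
qed

lemma pmf_cold: "pmf (cold r c) i = colw r c i"
  unfolding cold_def
proof (rule pmf_embed_pmf)
  show "0 \<le> colw r c x" for x by (rule colw_nonneg)
  have "(\<integral>\<^sup>+ x. ennreal (colw r c x) \<partial>count_space UNIV) = (\<Sum>i\<le>r. ennreal (colw r c i))"
    by (rule nn_integral_count_space') (auto simp: colw_def)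
  also have "\<dots> = ennreal (\<Sum>i\<le>r. colw r c i)" using colw_nonneg by (simp add: sum_ennreal)
  finally show "(\<integral>\<^sup>+ x. ennreal (colw r c x) \<partial>count_space UNIV) = 1" by (simp add: colw_sum)
qed

lemma set_cold: "set_pmf (cold r c) \<subseteq> {..r}"
  using pmf_cold by (auto simp: set_pmf_iff colw_def split: if_splits)

lemma marg:
  assumes "u < n"
  shows "measure_pmf.prob (Phi n r c) {\<phi>. \<phi> u = i} = colw r c i"
proof -
  have "measure_pmf.prob (Phi n r c) {\<phi>. \<phi> u = i} = measure_pmf.prob (Phi n r c) ((\<lambda>\<phi>. \<phi> u) -` {i})"
    by (simp add: vimage_def)
  also have "\<dots> = measure_pmf.prob (map_pmf (\<lambda>\<phi>. \<phi> u) (Phi n r c)) {i}"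
    by (simp add: measure_map_pmf)
  also have "map_pmf (\<lambda>\<phi>. \<phi> u) (Phi n r c) = cold r c"
    unfolding Phi_def using assms by (subst Pi_pmf_component) auto
  finally show ?thesis by (simp add: measure_pmf_single pmf_cold)
qed

lemma pairprob:
  assumes "u < n" "v < n" "u \<noteq> v"
  shows "measure_pmf.prob (Phi n r c) ({\<phi>. \<phi> u = i} \<inter> {\<phi>. \<phi> v = j}) = colw r c i * colw r c j"
proof -
  have "measure_pmf.prob (Phi n r c) ({\<phi>. \<phi> u = i} \<inter> {\<phi>. \<phi> v = j}) =
        measure_pmf.prob (Phi n r c) {\<phi>. \<phi> u = i} * measure_pmf.prob (Phi n r c) {\<phi>. \<phi> v = j}"
    unfolding Phi_def by (rule Pi_pmf_indep[of _ "{u}" "{v}"]) (use assms in auto)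
  then show ?thesis using marg assms by simp
qed

lemma supp:
  assumes "\<phi> \<in> set_pmf (Phi n r c)" "u < n"
  shows "\<phi> u \<le> r"
proof -
  have "\<phi> \<in> PiE_dflt {..<n} 0 (set_pmf \<circ> (\<lambda>_. cold r c))"
    using assms(1) unfolding Phi_def by (simp add: set_Pi_pmf)
  then have "\<phi> u \<in> set_pmf (cold r c)" using assms(2) unfolding PiE_dflt_def by auto
  then show ?thesis using set_cold by auto
qed

lemma edgeprob:
  assumes "u < n" "v < n" "u \<noteq> v"
  shows "measure_pmf.prob (Phi n r c) {\<phi>. \<phi> u = \<phi> v} = real r * c^2 + (1 - real r * c)^2"
proof -
  define A :: "nat \<Rightarrow> (nat \<Rightarrow> nat) set" where "A i = {\<phi>. \<phi> u = i} \<inter> {\<phi>. \<phi> v = i}" for i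
  have "measure_pmf.prob (Phi n r c) {\<phi>. \<phi> u = \<phi> v} = measure_pmf.prob (Phi n r c) (\<Union>(A ` {..r}))"
  proof (rule antisym)
    show "measure_pmf.prob (Phi n r c) {\<phi>. \<phi> u = \<phi> v} \<le> measure_pmf.prob (Phi n r c) (\<Union>(A ` {..r}))"
      by (rule pmf_prob_mono_support) (use supp assms in \<open>auto simp: A_def\<close>)
    show "measure_pmf.prob (Phi n r c) (\<Union>(A ` {..r})) \<le> measure_pmf.prob (Phi n r c) {\<phi>. \<phi> u = \<phi> v}"
      by (rule pmf_prob_mono_support) (auto simp: A_def)
  qed
  also have "\<dots> = (\<Sum>i\<le>r. measure_pmf.prob (Phi n r c) (A i))"
    by (rule measure_pmf.finite_measure_finite_Union) (auto simp: disjoint_family_on_def A_def)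
  also have "\<dots> = (\<Sum>i\<le>r. (colw r c i)^2)"
    unfolding A_def using pairprob[OF assms] by (simp add: power2_eq_square)
  finally show ?thesis by (simp add: colw_sq)
qed

end


context colsetup begin

lemma colgraph_sub: "colgraph Hn \<phi> \<subseteq> Hn" unfolding colgraph_def by auto

lemma colgraph_local:
  assumes "A \<subseteq> Hn" "\<forall>x\<in>\<Union>A. \<phi> x = \<psi> x"
  shows "colgraph Hn \<phi> \<inter> A = colgraph Hn \<psi> \<inter> A"
proof -
  have "(\<exists>i. \<forall>x\<in>e. \<phi> x = i) \<longleftrightarrow> (\<exists>i. \<forall>x\<in>e. \<psi> x = i)" if "e \<in> A" for e
  proof -
    have "\<forall>x\<in>e. \<phi> x = \<psi> x" using assms(2) that by auto
    then show ?thesis by metis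
  qed
  then show ?thesis using assms(1) unfolding colgraph_def by auto
qed

lemma M1p_mem:
  assumes sg: "simple_graph_on n Hn" and pdef: "p = real r * c^2 + (1 - real r * c)^2"
  shows "map_pmf (colgraph Hn) (Phi n r c) \<in> M1p Hn p"
  unfolding M1p_def
proof (intro CollectI conjI ballI)
  show "set_pmf (map_pmf (colgraph Hn) (Phi n r c)) \<subseteq> Pow Hn" using colgraph_sub by auto
next
  show "one_independent Hn (map_pmf (colgraph Hn) (Phi n r c))"
    unfolding one_independent_def
  proof (intro allI impI)
    fix A B S T assume AH: "A \<subseteq> Hn" and BH: "B \<subseteq> Hn" and AB: "\<Union>A \<inter> \<Union>B = {}"
    have sub: "\<Union>Hn \<subseteq> {..<n}" using sg unfolding simple_graph_on_def by auto
    let ?F = "{\<phi>. colgraph Hn \<phi> \<inter> A = S}" and ?G = "{\<phi>. colgraph Hn \<phi> \<inter> B = T}"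
    have "measure_pmf.prob (Phi n r c) (?F \<inter> ?G) = measure_pmf.prob (Phi n r c) ?F * measure_pmf.prob (Phi n r c) ?G"
      unfolding Phi_def
    proof (rule Pi_pmf_indep[of _ "\<Union>A" "\<Union>B"])
      show "\<Union>A \<subseteq> {..<n}" "\<Union>B \<subseteq> {..<n}" using AH BH sub by auto
      show "\<phi> \<in> ?F \<longleftrightarrow> \<psi> \<in> ?F" if "\<forall>x\<in>\<Union>A. \<phi> x = \<psi> x" for \<phi> \<psi>
        using colgraph_local[OF AH that] by simp
      show "\<phi> \<in> ?G \<longleftrightarrow> \<psi> \<in> ?G" if "\<forall>x\<in>\<Union>B. \<phi> x = \<psi> x" for \<phi> \<psi>
        using colgraph_local[OF BH that] by simp
    qed (use AB in auto)
    moreover have "colgraph Hn -` {X. X \<inter> A = S \<and> X \<inter> B = T} = ?F \<inter> ?G" by auto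
    moreover have "colgraph Hn -` {X. X \<inter> A = S} = ?F" by auto
    moreover have "colgraph Hn -` {X. X \<inter> B = T} = ?G" by auto
    ultimately show "measure_pmf.prob (map_pmf (colgraph Hn) (Phi n r c)) {X. X \<inter> A = S \<and> X \<inter> B = T} =
        measure_pmf.prob (map_pmf (colgraph Hn) (Phi n r c)) {X. X \<inter> A = S} *
        measure_pmf.prob (map_pmf (colgraph Hn) (Phi n r c)) {X. X \<inter> B = T}"
      by (simp add: measure_map_pmf)
  qed
next
  fix e assume eH: "e \<in> Hn"
  then have "e \<subseteq> {..<n}" "card e = 2" using sg unfolding simple_graph_on_def by auto
  then obtain u v where uv: "e = {u, v}" "u \<noteq> v" "u < n" "v < n" by (auto simp: card_2_iff)
  have "colgraph Hn -` {X. e \<in> X} = {\<phi>. \<phi> u = \<phi> v}"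
    using eH uv unfolding colgraph_def by auto
  then show "measure_pmf.prob (map_pmf (colgraph Hn) (Phi n r c)) {X. e \<in> X} = p"
    using edgeprob[OF uv(3,4,2)] pdef by (simp add: measure_map_pmf)
qed

lemma comp_color:
  assumes "w \<in> component n (colgraph Hn \<phi>) v"
  shows "\<phi> w = \<phi> v"
proof -
  have "(\<lambda>a b. {a, b} \<in> colgraph Hn \<phi>)\<^sup>*\<^sup>* v w" using assms unfolding component_def by auto
  then show ?thesis
  proof (induction rule: rtranclp_induct)
    case base then show ?case by simp
  next
    case (step a b)
    then obtain i where "\<forall>x\<in>{a, b}. \<phi> x = i" unfolding colgraph_def by auto
    then show ?case using step.IH by auto
  qed
qed

lemma class_prob:
  assumes n: "n > 0" and eps: "\<epsilon> > 0"
  shows "measure_pmf.prob (Phi n r c) {\<phi>. (1 + \<epsilon>) * c * real n < real (card {u\<in>{..<n}. \<phi> u = i})}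
         \<le> 1 / (\<epsilon>^2 * c^2 * real n)"
proof -
  define E :: "nat \<Rightarrow> (nat \<Rightarrow> nat) set" where "E u = {\<phi>. \<phi> u = i}" for u
  let ?t = "\<epsilon> * c * real n"
  have t: "?t > 0" using n eps cpos by simp
  have sumI: "(\<Sum>u\<in>{..<n}. indicator (E u) \<phi>) = real (card {u\<in>{..<n}. \<phi> u = i})" for \<phi>
  proof -
    have "(\<Sum>u\<in>{..<n}. indicator (E u) \<phi>) = (\<Sum>u\<in>{..<n}. if u \<in> {u. \<phi> u = i} then 1 else 0 :: real)"
      unfolding E_def by (intro sum.cong) (auto simp: indicator_def)
    also have "\<dots> = (\<Sum>u\<in>{..<n} \<inter> {u. \<phi> u = i}. 1)" by (rule sum.inter_restrict[symmetric]) simp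
    also have "\<dots> = real (card {u\<in>{..<n}. \<phi> u = i})" by (simp add: Int_def)
    finally show ?thesis .
  qed
  have sumP: "(\<Sum>u\<in>{..<n}. measure_pmf.prob (Phi n r c) (E u)) = real n * colw r c i"
    unfolding E_def using marg by simp
  have good: "measure_pmf.prob (Phi n r c) (E u \<inter> E v) \<le> measure_pmf.prob (Phi n r c) (E u) * measure_pmf.prob (Phi n r c) (E v)"
    if "u \<in> {..<n}" "v \<in> {..<n}" "(u, v) \<notin> {(u, v). u = v}" for u v
    using pairprob[of u n v i i] marg that unfolding E_def by simp
  have cardB: "card ({(u, v). u = v} \<inter> {..<n} \<times> {..<n}) = n"
  proof -
    have "{(u, v). u = v} \<inter> {..<n} \<times> {..<n} = (\<lambda>u. (u, u)) ` {..<n}" by auto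
    moreover have "card ((\<lambda>u. (u, u)) ` {..<n}) = n" by (subst card_image) (auto simp: inj_on_def)
    ultimately show ?thesis by simp
  qed
  have "measure_pmf.prob (Phi n r c) {\<phi>. (1 + \<epsilon>) * c * real n < real (card {u\<in>{..<n}. \<phi> u = i})}
     \<le> measure_pmf.prob (Phi n r c) {\<phi>. ?t \<le> \<bar>(\<Sum>u\<in>{..<n}. indicator (E u) \<phi>) - (\<Sum>u\<in>{..<n}. measure_pmf.prob (Phi n r c) (E u))\<bar>}"
  proof (rule pmf_prob_mono_support)
    fix \<phi> assume "\<phi> \<in> {\<phi>. (1 + \<epsilon>) * c * real n < real (card {u\<in>{..<n}. \<phi> u = i})}"
    then have h: "(1 + \<epsilon>) * c * real n < real (card {u\<in>{..<n}. \<phi> u = i})" by simp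
    have "real n * colw r c i \<le> real n * c" using colw_le by (intro mult_left_mono) auto
    then show "\<phi> \<in> {\<phi>. ?t \<le> \<bar>(\<Sum>u\<in>{..<n}. indicator (E u) \<phi>) - (\<Sum>u\<in>{..<n}. measure_pmf.prob (Phi n r c) (E u))\<bar>}"
      using h unfolding sumI sumP by (simp add: algebra_simps)
  qed
  also have "\<dots> \<le> real (card ({(u, v). u = v} \<inter> {..<n} \<times> {..<n})) / ?t^2"
    by (rule second_moment_pmf[OF _ t good]) auto
  also have "\<dots> = 1 / (\<epsilon>^2 * c^2 * real n)"
    unfolding cardB using n by (simp add: power2_eq_square field_simps)
  finally show ?thesis .
qed

end


context colsetup begin

lemma part2_n:
  assumes sg: "simple_graph_on n Hn" and n: "n > 0" and eps: "\<epsilon> > 0"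
  shows "1 - real (r + 1) / (\<epsilon>^2 * c^2 * real n) \<le>
    measure_pmf.prob (map_pmf (colgraph Hn) (Phi n r c))
      {X. real (largest_component_size n X) \<le> (1 + \<epsilon>) * c * real n}"
proof -
  let ?t = "(1 + \<epsilon>) * c * real n"
  define B :: "nat \<Rightarrow> (nat \<Rightarrow> nat) set" where "B i = {\<phi>. ?t < real (card {u\<in>{..<n}. \<phi> u = i})}" for i
  let ?Gd = "{\<phi>. real (largest_component_size n (colgraph Hn \<phi>)) \<le> ?t}"
  have eq: "measure_pmf.prob (map_pmf (colgraph Hn) (Phi n r c))
      {X. real (largest_component_size n X) \<le> ?t} = measure_pmf.prob (Phi n r c) ?Gd"
    by (simp add: measure_map_pmf vimage_def)
  have "measure_pmf.prob (Phi n r c) (UNIV - ?Gd) \<le> measure_pmf.prob (Phi n r c) (\<Union>(B ` {..r}))"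
  proof (rule pmf_prob_mono_support)
    fix \<phi> assume sp: "\<phi> \<in> set_pmf (Phi n r c)" and "\<phi> \<in> UNIV - ?Gd"
    then have big: "?t < real (largest_component_size n (colgraph Hn \<phi>))" by auto
    have "largest_component_size n (colgraph Hn \<phi>) \<in> (\<lambda>v. card (component n (colgraph Hn \<phi>) v)) ` {..<n}"
      unfolding largest_component_size_def using n by (intro Max_in) auto
    then obtain v where v: "v < n" "largest_component_size n (colgraph Hn \<phi>) = card (component n (colgraph Hn \<phi>) v)"
      by auto
    have "component n (colgraph Hn \<phi>) v \<subseteq> {u\<in>{..<n}. \<phi> u = \<phi> v}"
      using comp_color comp_sub by blast
    then have "card (component n (colgraph Hn \<phi>) v) \<le> card {u\<in>{..<n}. \<phi> u = \<phi> v}"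
      by (intro card_mono) auto
    then have "\<phi> \<in> B (\<phi> v)" unfolding B_def using big v(2) by simp
    moreover have "\<phi> v \<in> {..r}" using supp[OF sp v(1)] by simp
    ultimately show "\<phi> \<in> \<Union>(B ` {..r})" by blast
  qed
  also have "\<dots> \<le> (\<Sum>i\<le>r. measure_pmf.prob (Phi n r c) (B i))"
    by (rule measure_pmf.finite_measure_subadditive_finite) auto
  also have "\<dots> \<le> (\<Sum>i\<le>r. 1 / (\<epsilon>^2 * c^2 * real n))"
    unfolding B_def by (intro sum_mono class_prob[OF n eps])
  also have "\<dots> = real (r + 1) / (\<epsilon>^2 * c^2 * real n)" by simp
  finally have "measure_pmf.prob (Phi n r c) (UNIV - ?Gd) \<le> real (r + 1) / (\<epsilon>^2 * c^2 * real n)" .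
  moreover have "measure_pmf.prob (Phi n r c) (UNIV - ?Gd) = 1 - measure_pmf.prob (Phi n r c) ?Gd"
    using measure_pmf.prob_compl[of ?Gd "Phi n r c"] by simp
  ultimately show ?thesis unfolding eq by linarith
qed

end

lemma part2:
  fixes r :: nat and p c :: real and H :: "nat \<Rightarrow> nat set set" and q :: "nat \<Rightarrow> real"
  assumes r: "r \<ge> 1" and p1: "1 / real (r + 1) < p" and p2: "p \<le> 1 / real r"
    and wp: "weakly_pseudorandom H q"
    and c: "c = (1 + sqrt ((real (r + 1) * p - 1) / real r)) / real (r + 1)"
  shows "\<exists>\<mu>. (\<forall>n. \<mu> n \<in> M1p (H n) p) \<and>
        (\<forall>\<epsilon>>0. (\<lambda>n. measure_pmf.prob (\<mu> n)
            {X. real (largest_component_size n X) \<le> (1 + \<epsilon>) * c * real n}) \<longlonglongrightarrow> 1)"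
proof -
  have cp: "1 / real (r + 1) < c" "c \<le> 1 / real r" "real r * c^2 + (1 - real r * c)^2 = p"
    using c_props[OF r p1 p2 c] by auto
  interpret colsetup r c using r cp(1,2) by unfold_locales auto
  have sg: "\<forall>n. simple_graph_on n (H n)" using wp unfolding weakly_pseudorandom_def by auto
  define \<mu> where "\<mu> n = map_pmf (colgraph (H n)) (Phi n r c)" for n
  have mem: "\<forall>n. \<mu> n \<in> M1p (H n) p"
    unfolding \<mu>_def using M1p_mem[OF spec[OF sg] cp(3)[symmetric]] by blast
  have lim: "(\<lambda>n. measure_pmf.prob (\<mu> n) {X. real (largest_component_size n X) \<le> (1 + \<epsilon>) * c * real n}) \<longlonglongrightarrow> 1"
    if eps: "\<epsilon> > 0" for \<epsilon>
  proof (rule tendsto_sandwich)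
    show "eventually (\<lambda>n. 1 - real (r + 1) / (\<epsilon>^2 * c^2) * (1 / real n) \<le>
        measure_pmf.prob (\<mu> n) {X. real (largest_component_size n X) \<le> (1 + \<epsilon>) * c * real n}) sequentially"
      using eventually_gt_at_top[of 0]
    proof eventually_elim
      case (elim n)
      have "real (r + 1) / (\<epsilon>^2 * c^2) * (1 / real n) = real (r + 1) / (\<epsilon>^2 * c^2 * real n)" by simp
      then show ?case using part2_n[OF spec[OF sg, of n] elim eps] unfolding \<mu>_def by simp
    qed
    show "eventually (\<lambda>n. measure_pmf.prob (\<mu> n) {X. real (largest_component_size n X) \<le> (1 + \<epsilon>) * c * real n} \<le> 1) sequentially"
      by simp
    have "(\<lambda>n::nat. 1 / real n) \<longlonglongrightarrow> 0" by real_asymp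
    then have "(\<lambda>n. 1 - real (r + 1) / (\<epsilon>^2 * c^2) * (1 / real n)) \<longlonglongrightarrow> 1 - real (r + 1) / (\<epsilon>^2 * c^2) * 0"
      by (intro tendsto_diff tendsto_mult tendsto_const)
    then show "(\<lambda>n. 1 - real (r + 1) / (\<epsilon>^2 * c^2) * (1 / real n)) \<longlonglongrightarrow> 1" by simp
  qed (rule tendsto_const)
  show ?thesis using mem lim by blast
qed


theorem theorem17:
  fixes r :: nat and p :: real
    and H :: "nat \<Rightarrow> nat set set" and q :: "nat \<Rightarrow> real"
  assumes "r \<ge> 1"
    and "1 / real (r + 1) < p" and "p \<le> 1 / real r"
    and "weakly_pseudorandom H q"
    and "(\<lambda>n. ln (real n) / real n) \<in> o(q)"
  defines "c \<equiv> (1 + sqrt ((real (r + 1) * p - 1) / real r)) / real (r + 1)"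
  shows
    "(\<forall>\<mu>. (\<forall>n. \<mu> n \<in> M1p (H n) p) \<longrightarrow>
        (\<forall>\<epsilon>>0. (\<lambda>n. measure_pmf.prob (\<mu> n)
            {X. real (largest_component_size n X) \<ge> (1 - \<epsilon>) * c * real n}) \<longlonglongrightarrow> 1))
     \<and>
     (\<exists>\<mu>. (\<forall>n. \<mu> n \<in> M1p (H n) p) \<and>
        (\<forall>\<epsilon>>0. (\<lambda>n. measure_pmf.prob (\<mu> n)
            {X. real (largest_component_size n X) \<le> (1 + \<epsilon>) * c * real n}) \<longlonglongrightarrow> 1))"
  proof (intro conjI allI impI)
  fix \<mu> :: "nat \<Rightarrow> nat set set pmf" and \<epsilon> :: real
  assume mu: "\<forall>n. \<mu> n \<in> M1p (H n) p" and eps: "\<epsilon> > 0"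
  show "(\<lambda>n. measure_pmf.prob (\<mu> n)
            {X. real (largest_component_size n X) \<ge> (1 - \<epsilon>) * c * real n}) \<longlonglongrightarrow> 1"
    by (rule part1[OF assms(1-5) c_def[THEN meta_eq_to_obj_eq] mu eps])
next
  show "\<exists>\<mu>. (\<forall>n. \<mu> n \<in> M1p (H n) p) \<and>
        (\<forall>\<epsilon>>0. (\<lambda>n. measure_pmf.prob (\<mu> n)
            {X. real (largest_component_size n X) \<le> (1 + \<epsilon>) * c * real n}) \<longlonglongrightarrow> 1)"
    by (rule part2[OF assms(1-4) c_def[THEN meta_eq_to_obj_eq]])
qed

end
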